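(* Let $\Gamma$ be a Neumaier graph of valency $k$ with diameter $2$. Then $\Gamma$ has at most $\max\{1+k+k(k-2),\,2k\}$ vertices.
   Context: All graphs are finite, simple, undirected and connected. A graph is edge-regular with parameters $(n,k,\lambda)$ if it has $n$ vertices, is $k$-regular, and any two adjacent vertices have exactly $\lambda$ common neighbours. A clique $C$ is a regular clique with nexus $a$ if every vertex not in $C$ has exactly $a$ neighbours in $C$. A Neumaier graph is a non-complete edge-regular graph containing a regular clique. *)

theory Defs
  imports Main
begin

definition simple_graph :: "'a set \<Rightarrow> ('a \<Rightarrow> 'a \<Rightarrow> bool) \<Rightarrow> bool" where
  "simple_graph V E \<longleftrightarrow> finite V \<and> V \<noteq> {} \<and>
     (\<forall>x y. E x y \<longrightarrow> x \<in> V \<and> y \<in> V) \<and>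
     (\<forall>x y. E x y \<longrightarrow> E y x) \<and> (\<forall>x. \<not> E x x)"

definition neighbours :: "'a set \<Rightarrow> ('a \<Rightarrow> 'a \<Rightarrow> bool) \<Rightarrow> 'a \<Rightarrow> 'a set" where
  "neighbours V E x = {y \<in> V. E x y}"

text \<open>A walk given as a vertex list; its length is the number of edges.\<close>
definition is_walk :: "'a set \<Rightarrow> ('a \<Rightarrow> 'a \<Rightarrow> bool) \<Rightarrow> 'a list \<Rightarrow> bool" where
  "is_walk V E p \<longleftrightarrow> p \<noteq> [] \<and> set p \<subseteq> V \<and>
     (\<forall>i. Suc i < length p \<longrightarrow> E (p ! i) (p ! Suc i))"

definition connected_graph :: "'a set \<Rightarrow> ('a \<Rightarrow> 'a \<Rightarrow> bool) \<Rightarrow> bool" where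
  "connected_graph V E \<longleftrightarrow> (\<forall>x\<in>V. \<forall>y\<in>V. \<exists>p. is_walk V E p \<and> hd p = x \<and> last p = y)"

definition graph_dist :: "'a set \<Rightarrow> ('a \<Rightarrow> 'a \<Rightarrow> bool) \<Rightarrow> 'a \<Rightarrow> 'a \<Rightarrow> nat" where
  "graph_dist V E x y = (LEAST n. \<exists>p. is_walk V E p \<and> hd p = x \<and> last p = y \<and> length p = Suc n)"

definition diameter :: "'a set \<Rightarrow> ('a \<Rightarrow> 'a \<Rightarrow> bool) \<Rightarrow> nat" where
  "diameter V E = Max {graph_dist V E x y | x y. x \<in> V \<and> y \<in> V}"

definition regular_graph :: "'a set \<Rightarrow> ('a \<Rightarrow> 'a \<Rightarrow> bool) \<Rightarrow> nat \<Rightarrow> bool" where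
  "regular_graph V E k \<longleftrightarrow> (\<forall>x\<in>V. card (neighbours V E x) = k)"

definition edge_regular :: "'a set \<Rightarrow> ('a \<Rightarrow> 'a \<Rightarrow> bool) \<Rightarrow> nat \<Rightarrow> nat \<Rightarrow> nat \<Rightarrow> bool" where
  "edge_regular V E n k lam \<longleftrightarrow> card V = n \<and> regular_graph V E k \<and>
     (\<forall>x y. E x y \<longrightarrow> card (neighbours V E x \<inter> neighbours V E y) = lam)"

definition is_clique :: "'a set \<Rightarrow> ('a \<Rightarrow> 'a \<Rightarrow> bool) \<Rightarrow> 'a set \<Rightarrow> bool" where
  "is_clique V E C \<longleftrightarrow> C \<subseteq> V \<and> (\<forall>x\<in>C. \<forall>y\<in>C. x \<noteq> y \<longrightarrow> E x y)"

definition regular_clique :: "'a set \<Rightarrow> ('a \<Rightarrow> 'a \<Rightarrow> bool) \<Rightarrow> 'a set \<Rightarrow> nat \<Rightarrow> bool" where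
  "regular_clique V E C a \<longleftrightarrow> is_clique V E C \<and> C \<noteq> {} \<and>
     (\<forall>x\<in>V - C. card (neighbours V E x \<inter> C) = a)"

definition complete_graph :: "'a set \<Rightarrow> ('a \<Rightarrow> 'a \<Rightarrow> bool) \<Rightarrow> bool" where
  "complete_graph V E \<longleftrightarrow> (\<forall>x\<in>V. \<forall>y\<in>V. x \<noteq> y \<longrightarrow> E x y)"

definition neumaier_graph :: "'a set \<Rightarrow> ('a \<Rightarrow> 'a \<Rightarrow> bool) \<Rightarrow> nat \<Rightarrow> bool" where
  "neumaier_graph V E k \<longleftrightarrow> \<not> complete_graph V E \<and>
     (\<exists>lam. edge_regular V E (card V) k lam) \<and> (\<exists>C a. regular_clique V E C a)"

end

theory Submission
  imports Defs
begin

lemma diam_path: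
  assumes sg: "simple_graph V E" and cg: "connected_graph V E" and dm: "diameter V E = 2"
    and xV: "x \<in> V" and yV: "y \<in> V"
  shows "x = y \<or> E x y \<or> (\<exists>z. E x z \<and> E z y)"
proof -
  have fin: "finite V" using sg by (simp add: simple_graph_def)
  have "{graph_dist V E x y | x y. x \<in> V \<and> y \<in> V} = (\<lambda>(x,y). graph_dist V E x y) ` (V \<times> V)"
    by auto
  hence finS: "finite {graph_dist V E x y | x y. x \<in> V \<and> y \<in> V}" using fin by simp
  have "graph_dist V E x y \<le> diameter V E" unfolding diameter_def
    by (rule Max_ge[OF finS]) (use xV yV in blast)
  hence d2: "graph_dist V E x y \<le> 2" using dm by simp
  obtain p where p: "is_walk V E p" "hd p = x" "last p = y" using cg xV yV
    unfolding connected_graph_def by blast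
  define P where "P = (\<lambda>n. \<exists>p. is_walk V E p \<and> hd p = x \<and> last p = y \<and> length p = Suc n)"
  have "p \<noteq> []" using p(1) by (simp add: is_walk_def)
  hence "P (length p - 1)" using p unfolding P_def by (intro exI[of _ p]) auto
  hence "P (LEAST n. P n)" by (rule LeastI)
  moreover have "graph_dist V E x y = (LEAST n. P n)" by (simp add: graph_dist_def P_def)
  ultimately obtain q where q: "is_walk V E q" "hd q = x" "last q = y"
      "length q = Suc (graph_dist V E x y)" unfolding P_def by auto
  have qne: "q \<noteq> []" using q(1) by (simp add: is_walk_def)
  have hq: "hd q = q ! 0" using qne by (simp add: hd_conv_nth)
  have lq: "last q = q ! (length q - 1)" using qne by (simp add: last_conv_nth)
  have st: "\<And>i. Suc i < length q \<Longrightarrow> E (q ! i) (q ! Suc i)" using q(1) by (simp add: is_walk_def)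
  consider "graph_dist V E x y = 0" | "graph_dist V E x y = 1" | "graph_dist V E x y = 2" using d2 by linarith
  then show ?thesis
  proof cases
    case 1 then show ?thesis using q hq lq by simp
  next
    case 2 then show ?thesis using q hq lq st[of 0] by simp
  next
    case 3 then show ?thesis using q hq lq st[of 0] st[of 1] by (simp add: numeral_2_eq_2) blast
  qed
qed

theorem lemma3p2:
  fixes V :: "'a set" and E :: "'a \<Rightarrow> 'a \<Rightarrow> bool" and k :: nat
  assumes "simple_graph V E" and "connected_graph V E"
    and "neumaier_graph V E k"
    and "diameter V E = 2"
  shows "int (card V) \<le> max (1 + int k + int k * (int k - 2)) (2 * int k)"
proof -
  note sg = assms(1) and cg = assms(2) and dm = assms(4)
  have fin: "finite V" using sg by (simp add: simple_graph_def)
  have inV: "\<And>x y. E x y \<Longrightarrow> x \<in> V \<and> y \<in> V" using sg by (simp add: simple_graph_def)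
  have sym: "\<And>x y. E x y \<Longrightarrow> E y x" using sg by (simp add: simple_graph_def)
  have irr: "\<And>x. \<not> E x x" using sg by (simp add: simple_graph_def)
  have path: "\<And>x y. x \<in> V \<Longrightarrow> y \<in> V \<Longrightarrow> x = y \<or> E x y \<or> (\<exists>z. E x z \<and> E z y)"
    using diam_path[OF sg cg dm] by blast
  have ncomp: "\<not> complete_graph V E" using assms(3) by (simp add: neumaier_graph_def)
  obtain lam where er: "edge_regular V E (card V) k lam" using assms(3) by (auto simp: neumaier_graph_def)
  obtain C a where rc: "regular_clique V E C a" using assms(3) by (auto simp: neumaier_graph_def)
  define N where "N = neighbours V E"
  have Nmem: "\<And>x y. y \<in> N x \<longleftrightarrow> E x y" unfolding N_def neighbours_def using inV by auto
  have Nfin: "\<And>x. finite (N x)" unfolding N_def neighbours_def using fin by simp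
  have Ncard: "\<And>x. x \<in> V \<Longrightarrow> card (N x) = k" using er
    by (simp add: edge_regular_def regular_graph_def N_def)
  have lamE: "\<And>x y. E x y \<Longrightarrow> card (N x \<inter> N y) = lam" using er
    by (simp add: edge_regular_def N_def)
  have CV: "C \<subseteq> V" and Ccl: "\<And>x y. x \<in> C \<Longrightarrow> y \<in> C \<Longrightarrow> x \<noteq> y \<Longrightarrow> E x y"
    and Cne: "C \<noteq> {}" and nex: "\<And>x. x \<in> V - C \<Longrightarrow> card (N x \<inter> C) = a"
    using rc by (auto simp: regular_clique_def is_clique_def N_def)
  have Cfin: "finite C" using CV fin finite_subset by blast
  have hasnb: "\<forall>w\<in>V-C. \<exists>c\<in>C. E w c"
  proof (rule ccontr)
    assume "\<not> ?thesis"
    then obtain w where w: "w \<in> V - C" "\<And>c. c \<in> C \<Longrightarrow> \<not> E w c" by blast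
    have "N w \<inter> C = {}" using w Nmem by auto
    hence a0: "a = 0" using nex[OF w(1)] by simp
    obtain c where c: "c \<in> C" using Cne by blast
    have nb: "\<And>z c. z \<in> V - C \<Longrightarrow> c \<in> C \<Longrightarrow> \<not> E z c"
    proof
      fix z c assume "z \<in> V - C" "c \<in> C" "E z c"
      hence "c \<in> N z \<inter> C" using Nmem by auto
      hence "card (N z \<inter> C) \<noteq> 0" using Cfin by auto
      thus False using nex[OF \<open>z \<in> V - C\<close>] a0 by simp
    qed
    have "c \<in> V" using c CV by blast
    have "w \<in> V" using w(1) by blast
    from path[OF \<open>c \<in> V\<close> this] show False
    proof (elim disjE exE conjE)
      assume "c = w" thus False using w c by blast
    next
      assume "E c w" thus False using sym w c by blast
    next
      fix z assume "E c z" "E z w"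
      show False
      proof (cases "z \<in> C")
        case True thus ?thesis using \<open>E z w\<close> sym w by blast
      next
        case False thus ?thesis using nb[of z c] \<open>E c z\<close> inV sym c by blast
      qed
    qed
  qed
  show ?thesis
  proof (cases "\<exists>x y z. E x y \<and> E x z \<and> E y z")
    case True
    then obtain x y z where t: "E x y" "E x z" "E y z" by blast
    have "z \<in> N x \<inter> N y" using t Nmem sym by auto
    hence "card (N x \<inter> N y) \<noteq> 0" using Nfin[of x] by (metis card_0_eq empty_iff finite_Int)
    hence "lam \<noteq> 0" using lamE[OF t(1)] by simp
    hence lam1: "lam \<ge> 1" by simp
    have "{y, z} \<subseteq> N x" using t Nmem by auto
    hence "card {y, z} \<le> k" using Ncard[of x] inV t(1) Nfin card_mono by metis
    moreover have "y \<noteq> z" using t irr by auto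
    ultimately have k2: "k \<ge> 2" by simp
    obtain x0 where x0: "x0 \<in> V" using inV t(1) by blast
    define B where "B = (\<lambda>y. N y - insert x0 (N x0 \<inter> N y))"
    have "V \<subseteq> insert x0 (N x0 \<union> (\<Union>y\<in>N x0. B y))"
    proof
      fix w assume w: "w \<in> V"
      from path[OF x0 w] show "w \<in> insert x0 (N x0 \<union> (\<Union>y\<in>N x0. B y))"
      proof (elim disjE exE conjE)
        fix z assume "E x0 z" "E z w"
        thus ?thesis unfolding B_def using Nmem by auto
      qed (use Nmem in auto)
    qed
    hence "card V \<le> card (insert x0 (N x0 \<union> (\<Union>y\<in>N x0. B y)))"
      by (rule card_mono[rotated]) (auto simp: B_def Nfin)
    also have "\<dots> \<le> Suc (card (N x0 \<union> (\<Union>y\<in>N x0. B y)))" by (simp add: card_insert_if B_def Nfin)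
    also have "card (N x0 \<union> (\<Union>y\<in>N x0. B y)) \<le> card (N x0) + card (\<Union>y\<in>N x0. B y)"
      by (rule card_Un_le)
    also have "card (\<Union>y\<in>N x0. B y) \<le> (\<Sum>y\<in>N x0. card (B y))" by (rule card_UN_le) (simp add: Nfin)
    also have "(\<Sum>y\<in>N x0. card (B y)) = (\<Sum>y\<in>N x0. k - Suc lam)"
    proof (rule sum.cong[OF refl])
      fix y assume y: "y \<in> N x0"
      have Exy: "E x0 y" using y Nmem by auto
      have sub: "insert x0 (N x0 \<inter> N y) \<subseteq> N y" using Exy Nmem sym by auto
      have "x0 \<notin> N x0 \<inter> N y" using irr Nmem by auto
      hence "card (insert x0 (N x0 \<inter> N y)) = Suc lam" using lamE[OF Exy] Nfin by simp
      moreover have "card (N y) = k" using Ncard inV Exy by blast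
      ultimately show "card (B y) = k - Suc lam" unfolding B_def
        using card_Diff_subset[OF finite_subset[OF sub Nfin] sub] by simp
    qed
    also have "\<dots> = k * (k - Suc lam)" using Ncard[OF x0] by simp
    also have "\<dots> \<le> k * (k - 2)" using lam1 by (intro mult_le_mono2) simp
    finally have "card V \<le> Suc (k + k * (k - 2))" using Ncard[OF x0] by simp
    hence "int (card V) \<le> int (Suc (k + k * (k - 2)))" by linarith
    moreover have "int (Suc (k + k * (k - 2))) = 1 + int k + int k * (int k - 2)"
      using k2 by (simp add: of_nat_diff)
    ultimately have "int (card V) \<le> 1 + int k + int k * (int k - 2)" by linarith
    thus ?thesis by simp
  next
    case False
    have nbc: "\<And>w. w \<in> V \<Longrightarrow> w \<notin> C \<Longrightarrow> \<exists>c\<in>C. E w c" using hasnb by blast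
    have "card C \<noteq> 0" using Cfin Cne by simp
    moreover have "\<not> card C \<ge> 3"
    proof
      assume "card C \<ge> 3"
      then obtain D where "D \<subseteq> C" "card D = 3" using obtain_subset_with_card_n by metis
      then obtain x y z where "x \<in> C" "y \<in> C" "z \<in> C" "x \<noteq> y" "y \<noteq> z" "x \<noteq> z"
        by (auto simp: card_3_iff)
      thus False using False Ccl by blast
    qed
    ultimately consider "card C = 1" | "card C = 2" by linarith
    thus ?thesis
    proof cases
      case 1
      then obtain c where c: "C = {c}" by (rule card_1_singletonE)
      have "V \<subseteq> insert c (N c)" using nbc c Nmem sym by blast
      hence "card V \<le> card (insert c (N c))" using Nfin by (simp add: card_mono)
      also have "\<dots> \<le> Suc (card (N c))" using Nfin by (simp add: card_insert_if)
      finally have cV: "card V \<le> Suc k" using Ncard[of c] CV c by simp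
      have "k \<noteq> 0"
      proof
        assume "k = 0"
        hence "N c = {}" using Ncard[of c] CV c Nfin by auto
        hence "V \<subseteq> {c}" using \<open>V \<subseteq> insert c (N c)\<close> by simp
        thus False using ncomp by (auto simp: complete_graph_def)
      qed
      thus ?thesis using cV by simp
    next
      case 2
      then obtain u v where uv: "C = {u, v}" "u \<noteq> v" by (auto simp: card_2_iff)
      have "E u v" using Ccl uv by auto
      hence "V \<subseteq> N u \<union> N v" using nbc uv Nmem sym by blast
      hence "card V \<le> card (N u \<union> N v)" using Nfin by (simp add: card_mono)
      also have "\<dots> \<le> card (N u) + card (N v)" by (rule card_Un_le)
      also have "\<dots> = 2 * k" using Ncard uv CV by auto
      finally show ?thesis by simp
    qed
  qed
qed

end
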